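(* Let $(T,E)$ be the $3$-regular tree, let $x\in T$, and let $y$ be a neighbor of $x$. For every integer $t\ge 0$, the Fibonacci vectors $s_t(x)$ and $r_t(x,y)$ have non-negative coordinates, and $$s_t(x)_- = f_{2t},\quad s_t(x)_+ = f_{2t+2},\quad r_t(x,y)_- = f_{2t-1},\quad r_t(x,y)_+ = f_{2t+1}.$$
   Context: $(f_i)_{i\in\mathbb Z}$ denotes the Fibonacci numbers with $f_0=0$, $f_1=1$ and $f_{i+1}=f_i+f_{i-1}$ for all $i\in\mathbb Z$ (so $f_{-1}=1$). $(T,E)$ is the $3$-regular tree (every vertex has exactly three neighbors); $d(x,z)$ is the graph distance. $K_0(T)$ is the free abelian group with basis $\{s(x): x\in T\}$; an element is written $a=\sum_x a_x s(x)$ with finitely many nonzero $a_x\in\mathbb Z$. For $y\in T$ the reflection $\sigma^y:K_0(T)\to K_0(T)$ is given by $(\sigma^y a)_z=a_z$ for $z\neq y$ and $(\sigma^y a)_y=-a_y+\sum_{\{z,y\}\in E}a_z$. For $x\in T$, $\Sigma^x$ denotes the composition of all $\sigma^y$ with $d(x,y)$ even, and $\underline\Sigma^x$ the composition of all $\sigma^y$ with $d(x,y)$ odd (these reflections pairwise commute, so the compositions are well defined on $K_0(T)$). Define $s_0(x)=s(x)$ and $s_{t+1}(x)=\underline\Sigma^x s_t(x)$ if $t$ is even, $s_{t+1}(x)=\Sigma^x s_t(x)$ if $t$ is odd. For neighbors $x,y$ define $r_0(x,y)=s(x)+s(y)$ and $r_{t+1}(x,y)=\underline\Sigma^x r_t(x,y)$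 if $t$ is even, $r_{t+1}(x,y)=\Sigma^x r_t(x,y)$ if $t$ is odd. For such a vector $a$ (equal to $s_t(x)$ or $r_t(x,y)$) put $a_-=\sum_{z:\,d(x,z)\not\equiv t \pmod 2} a_z$ and $a_+=\sum_{z:\,d(x,z)\equiv t\pmod 2} a_z$. *)

theory Defs
  imports "HOL-Number_Theory.Fib"
begin

text \<open>f_0 = 0, f_1 = 1, f_{i+1} = f_i + f_{i-1} for all integers i;
  for negative indices this forces f_{-n} = (-1)^(n+1) f_n.\<close>
definition fibz :: "int \<Rightarrow> int" where
  "fibz i = (if 0 \<le> i then int (fib (nat i))
             else (-1) ^ (nat (- i) + 1) * int (fib (nat (- i))))"

text \<open>Model: reduced words over the alphabet {0,1,2} (no two consecutive equal letters),
  i.e. the Cayley graph of the free product of three copies of Z/2. Two words are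
  adjacent iff one is obtained from the other by appending one letter. This is the
  3-regular tree.\<close>

definition reduced_word :: "nat list \<Rightarrow> bool" where
  "reduced_word w \<longleftrightarrow> (\<forall>c\<in>set w. c < 3) \<and> (\<forall>i. Suc i < length w \<longrightarrow> w ! i \<noteq> w ! Suc i)"

typedef tree3 = "{w. reduced_word w}"
  by (rule exI[of _ "[]"]) (simp add: reduced_word_def)

definition adj :: "tree3 \<Rightarrow> tree3 \<Rightarrow> bool" where
  "adj u v \<longleftrightarrow> (\<exists>c. Rep_tree3 v = Rep_tree3 u @ [c]) \<or> (\<exists>c. Rep_tree3 u = Rep_tree3 v @ [c])"

definition tdist :: "tree3 \<Rightarrow> tree3 \<Rightarrow> nat" where
  "tdist u v = (LEAST n. (adj ^^ n) u v)"

text \<open>Elements of K_0(T) are finitely supported functions tree3 \<Rightarrow> int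
  (a z is the coefficient of s(z)). The basis vector s(x):\<close>
definition sbasis :: "tree3 \<Rightarrow> tree3 \<Rightarrow> int" where
  "sbasis x = (\<lambda>z. if z = x then 1 else 0)"

definition refl :: "tree3 \<Rightarrow> (tree3 \<Rightarrow> int) \<Rightarrow> tree3 \<Rightarrow> int" where
  "refl y a = a(y := - a y + (\<Sum>z\<in>{z. adj z y}. a z))"

text \<open>Composition of all reflections sigma^y with y in a set of pairwise non-adjacent
  vertices given by P. Since these reflections pairwise commute and sigma^y changes only
  coordinate y using coordinates at neighbours of y (which are not in P), the composition
  acts coordinatewise as below.\<close>
definition refl_all :: "(tree3 \<Rightarrow> bool) \<Rightarrow> (tree3 \<Rightarrow> int) \<Rightarrow> tree3 \<Rightarrow> int" where
  "refl_all P a = (\<lambda>y. if P y then - a y + (\<Sum>z\<in>{z. adj z y}. a z) else a y)"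

definition Sigma_even :: "tree3 \<Rightarrow> (tree3 \<Rightarrow> int) \<Rightarrow> tree3 \<Rightarrow> int" where
  "Sigma_even x = refl_all (\<lambda>y. even (tdist x y))"

definition Sigma_odd :: "tree3 \<Rightarrow> (tree3 \<Rightarrow> int) \<Rightarrow> tree3 \<Rightarrow> int" where
  "Sigma_odd x = refl_all (\<lambda>y. odd (tdist x y))"

primrec svec :: "tree3 \<Rightarrow> nat \<Rightarrow> tree3 \<Rightarrow> int" where
  "svec x 0 = sbasis x"
| "svec x (Suc t) = (if even t then Sigma_odd x (svec x t) else Sigma_even x (svec x t))"

primrec rvec :: "tree3 \<Rightarrow> tree3 \<Rightarrow> nat \<Rightarrow> tree3 \<Rightarrow> int" where
  "rvec x y 0 = (\<lambda>z. sbasis x z + sbasis y z)"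
| "rvec x y (Suc t) = (if even t then Sigma_odd x (rvec x y t) else Sigma_even x (rvec x y t))"

definition minus_part :: "tree3 \<Rightarrow> nat \<Rightarrow> (tree3 \<Rightarrow> int) \<Rightarrow> int" where
  "minus_part x t a = (\<Sum>z\<in>{z. a z \<noteq> 0 \<and> \<not> tdist x z mod 2 = t mod 2}. a z)"

definition plus_part :: "tree3 \<Rightarrow> nat \<Rightarrow> (tree3 \<Rightarrow> int) \<Rightarrow> int" where
  "plus_part x t a = (\<Sum>z\<in>{z. a z \<noteq> 0 \<and> tdist x z mod 2 = t mod 2}. a z)"

end

theory Submission
  imports Defs
begin


abbreviation lenp :: "tree3 \<Rightarrow> nat" where "lenp v \<equiv> length (Rep_tree3 v)"

lemma rw_Rep: "reduced_word (Rep_tree3 v)"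
  using Rep_tree3 by auto

lemma rw_snoc: "reduced_word (w @ [c]) \<longleftrightarrow> reduced_word w \<and> c < 3 \<and> (w \<noteq> [] \<longrightarrow> last w \<noteq> c)"
proof
  assume h: "reduced_word (w @ [c])"
  have "reduced_word w"
    unfolding reduced_word_def
  proof safe
    fix d assume "d \<in> set w" thus "d < 3" using h by (auto simp: reduced_word_def)
  next
    fix i assume "Suc i < length w" "w ! i = w ! Suc i"
    thus False using h[unfolded reduced_word_def] by (auto simp: nth_append split: if_splits)
  qed
  moreover have "c < 3" using h by (auto simp: reduced_word_def)
  moreover have "last w \<noteq> c" if "w \<noteq> []"
  proof
    assume "last w = c"
    have hh: "\<forall>i. Suc i < length (w@[c]) \<longrightarrow> (w@[c])!i \<noteq> (w@[c])! Suc i"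
      using h by (simp add: reduced_word_def)
    have "(w @ [c]) ! (length w - 1) \<noteq> (w @ [c]) ! Suc (length w - 1)"
      using hh[rule_format, of "length w - 1"] that by simp
    thus False using \<open>last w = c\<close> that by (simp add: nth_append last_conv_nth)
  qed
  ultimately show "reduced_word w \<and> c < 3 \<and> (w \<noteq> [] \<longrightarrow> last w \<noteq> c)" by blast
next
  assume h: "reduced_word w \<and> c < 3 \<and> (w \<noteq> [] \<longrightarrow> last w \<noteq> c)"
  show "reduced_word (w @ [c])"
    unfolding reduced_word_def
  proof safe
    fix d assume "d \<in> set (w @ [c])" thus "d < 3" using h by (auto simp: reduced_word_def)
  next
    fix i assume i: "Suc i < length (w @ [c])" "(w @ [c]) ! i = (w @ [c]) ! Suc i"
    show False
    proof (cases "Suc i < length w")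
      case True thus False using h i by (auto simp: reduced_word_def nth_append)
    next
      case False
      hence "i = length w - 1" using i by simp
      thus False using h i \<open>\<not> Suc i < length w\<close> by (auto simp: nth_append last_conv_nth)
    qed
  qed
qed

lemma adj_sym: "adj u v \<Longrightarrow> adj v u" by (auto simp: adj_def)

lemma adj_len: "adj u v \<Longrightarrow> lenp u = Suc (lenp v) \<or> lenp v = Suc (lenp u)"
  by (auto simp: adj_def)

lemma to_root: "(adj ^^ lenp u) u (Abs_tree3 [])"
proof (induction "lenp u" arbitrary: u)
  case 0
  hence "Rep_tree3 u = []" by simp
  hence "u = Abs_tree3 []" by (metis Rep_tree3_inverse)
  thus ?case using \<open>0 = lenp u\<close> by simp
next
  case (Suc n)
  obtain w c where wc: "Rep_tree3 u = w @ [c]" using Suc(2)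
    by (cases "Rep_tree3 u" rule: rev_cases) auto
  have rw: "reduced_word w" using rw_Rep[of u] wc rw_snoc by metis
  define u' where "u' = Abs_tree3 w"
  have Ru': "Rep_tree3 u' = w" using rw by (simp add: u'_def Abs_tree3_inverse)
  have "adj u u'" using wc Ru' by (auto simp: adj_def)
  moreover have "(adj ^^ n) u' (Abs_tree3 [])" using Suc(1)[of u'] Suc(2) wc Ru' by simp
  ultimately show ?case using Suc(2) by (metis relpowp_Suc_I2)
qed

lemma relpow_sym: "(adj ^^ n) a b \<Longrightarrow> (adj ^^ n) b a"
proof (induction n arbitrary: b)
  case 0 thus ?case by simp
next
  case (Suc n)
  from Suc(2) obtain m where "(adj ^^ n) a m" "adj m b" by (auto elim: relpowp_Suc_E)
  thus ?case using Suc(1) adj_sym relpowp_Suc_I2 by metis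
qed

lemma path_ex: "\<exists>n. (adj ^^ n) u v"
proof -
  have "(adj ^^ (lenp u + lenp v)) u v"
    unfolding relpowp_add using to_root[of u] relpow_sym[OF to_root[of v]] by auto
  thus ?thesis by blast
qed

lemma path_par: "(adj ^^ n) u v \<Longrightarrow> even n \<longleftrightarrow> even (lenp u + lenp v)"
proof (induction n arbitrary: v)
  case 0 thus ?case by simp
next
  case (Suc n)
  from Suc(2) obtain m where "(adj ^^ n) u m" "adj m v" by (auto elim: relpowp_Suc_E)
  thus ?case using Suc(1) adj_len by fastforce
qed

lemma tdist_par: "even (tdist u v) \<longleftrightarrow> even (lenp u + lenp v)"
proof -
  have "(adj ^^ tdist u v) u v" unfolding tdist_def using path_ex by (rule LeastI_ex)
  thus ?thesis by (rule path_par)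
qed

lemma adj_par: "adj u v \<Longrightarrow> even (tdist x u) \<longleftrightarrow> \<not> even (tdist x v)"
  using adj_len[of u v] tdist_par by auto

definition N :: "tree3 \<Rightarrow> tree3 set" where "N v = {z. adj z v}"

lemma Rep_image_Collect: "Rep_tree3 ` {z. Q (Rep_tree3 z)} = {u. reduced_word u \<and> Q u}"
proof (rule set_eqI, rule iffI)
  fix u assume "u \<in> Rep_tree3 ` {z. Q (Rep_tree3 z)}" thus "u \<in> {u. reduced_word u \<and> Q u}"
    using rw_Rep by auto
next
  fix u assume "u \<in> {u. reduced_word u \<and> Q u}"
  hence "Rep_tree3 (Abs_tree3 u) = u" "Q u" by (auto simp: Abs_tree3_inverse)
  thus "u \<in> Rep_tree3 ` {z. Q (Rep_tree3 z)}" by (metis (mono_tags) image_eqI mem_Collect_eq)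
qed

lemma N_Rep: "Rep_tree3 ` N v = {u. reduced_word u \<and> ((\<exists>c. u = Rep_tree3 v @ [c]) \<or> (\<exists>c. Rep_tree3 v = u @ [c]))}"
proof -
  have "N v = {z. (\<lambda>u. (\<exists>c. u = Rep_tree3 v @ [c]) \<or> (\<exists>c. Rep_tree3 v = u @ [c])) (Rep_tree3 z)}"
    by (auto simp: N_def adj_def)
  thus ?thesis using Rep_image_Collect by simp
qed

lemma N_Rep2: "Rep_tree3 ` N v = (if Rep_tree3 v = [] then {[0],[1],[2]}
        else {butlast (Rep_tree3 v)} \<union> (\<lambda>c. Rep_tree3 v @ [c]) ` {c. c < 3 \<and> c \<noteq> last (Rep_tree3 v)})"
proof (cases "Rep_tree3 v = []")
  case True
  have "{u. reduced_word u \<and> ((\<exists>c. u = [c]) \<or> (\<exists>c. [] = u @ [c]))} = {[0],[1],[2]}"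
  proof -
    have e: "{c::nat. c < 3} = {0,1,2}" by auto
    have "{u. reduced_word u \<and> ((\<exists>c. u = [c]) \<or> (\<exists>c. [] = u @ [c]))} = (\<lambda>c. [c]) ` {c. c < 3}"
      using rw_snoc[of "[]"] by (auto simp: reduced_word_def)
    thus ?thesis unfolding e by simp
  qed
  thus ?thesis using True by (simp add: N_Rep)
next
  case False
  let ?w = "Rep_tree3 v"
  have bl: "?w = butlast ?w @ [last ?w]" using False by simp
  have rw: "reduced_word ?w" by (rule rw_Rep)
  hence "reduced_word (butlast ?w)" using bl rw_snoc by metis
  note brw = this
  let ?R = "{butlast ?w} \<union> (\<lambda>c. ?w @ [c]) ` {c. c < 3 \<and> c \<noteq> last ?w}"
  have "{u. reduced_word u \<and> ((\<exists>c. u = ?w @ [c]) \<or> (\<exists>c. ?w = u @ [c]))} = ?R"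
  proof (rule set_eqI, rule iffI)
    fix u assume "u \<in> {u. reduced_word u \<and> ((\<exists>c. u = ?w @ [c]) \<or> (\<exists>c. ?w = u @ [c]))}"
    then have ru: "reduced_word u" and "(\<exists>c. u = ?w @ [c]) \<or> (\<exists>c. ?w = u @ [c])" by auto
    then show "u \<in> ?R"
    proof (elim disjE exE)
      fix c assume uc: "u = ?w @ [c]"
      then have "c < 3" "c \<noteq> last ?w" using ru rw_snoc False by auto
      thus ?thesis using uc by auto
    next
      fix c assume "?w = u @ [c]" hence "u = butlast ?w" by simp
      thus ?thesis by simp
    qed
  next
    fix u assume "u \<in> ?R"
    hence "u = butlast ?w \<or> u \<in> (\<lambda>c. ?w @ [c]) ` {c. c < 3 \<and> c \<noteq> last ?w}" by blast
    thus "u \<in> {u. reduced_word u \<and> ((\<exists>c. u = ?w @ [c]) \<or> (\<exists>c. ?w = u @ [c]))}"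
    proof (elim disjE)
      assume "u = butlast ?w" thus ?thesis using brw bl by blast
    next
      assume "u \<in> (\<lambda>c. ?w @ [c]) ` {c. c < 3 \<and> c \<noteq> last ?w}"
      thus ?thesis using rw_snoc[of ?w] rw False by auto
    qed
  qed
  thus ?thesis using False unfolding N_Rep by simp
qed

lemma N_card: "finite (N v) \<and> card (N v) = 3"
proof -
  let ?w = "Rep_tree3 v"
  have rw: "reduced_word ?w" by (rule rw_Rep)
  have inj: "inj_on Rep_tree3 A" for A by (meson Rep_tree3_inject inj_onI)
  have c2: "card {c::nat. c < 3 \<and> c \<noteq> d} = 2" if "d < 3" for d
  proof -
    have e: "{c::nat. c < 3 \<and> c \<noteq> d} = {0,1,2} - {d}" by auto
    have "d = 0 \<or> d = 1 \<or> d = 2" using that by auto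
    thus ?thesis unfolding e by (elim disjE) simp_all
  qed
  have "finite (Rep_tree3 ` N v) \<and> card (Rep_tree3 ` N v) = 3"
  proof (cases "?w = []")
    case True thus ?thesis by (simp add: N_Rep2)
  next
    case False
    have l3: "last ?w < 3" using rw False by (auto simp: reduced_word_def)
    have "card ((\<lambda>c. ?w @ [c]) ` {c. c < 3 \<and> c \<noteq> last ?w}) = 2"
      using c2[OF l3] by (subst card_image) (auto simp: inj_on_def)
    moreover have "butlast ?w \<notin> (\<lambda>c. ?w @ [c]) ` {c. c < 3 \<and> c \<noteq> last ?w}"
      by (auto dest: arg_cong[of _ _ length])
    ultimately show ?thesis using False by (simp add: N_Rep2)
  qed
  thus ?thesis using card_image[OF inj] finite_imageD[OF _ inj] by metis
qed



definition psum :: "(tree3 \<Rightarrow> bool) \<Rightarrow> (tree3 \<Rightarrow> int) \<Rightarrow> int" where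
  "psum P a = (\<Sum>z\<in>{z. a z \<noteq> 0 \<and> P z}. a z)"

definition Jc :: "(tree3 \<Rightarrow> bool) \<Rightarrow> (tree3 \<Rightarrow> int) \<Rightarrow> bool" where
  "Jc P a \<longleftrightarrow> (\<forall>z w. P z \<longrightarrow> adj w z \<longrightarrow> a z \<le> (\<Sum>w'\<in>N z - {w}. a w'))"

lemma N_fin: "finite (N v)" using N_card by blast

lemma N3: "\<exists>a b c. N v = {a,b,c} \<and> a \<noteq> b \<and> b \<noteq> c \<and> a \<noteq> c"
  using N_card[of v] by (simp add: card_3_iff)

lemma refl_all_N: "refl_all P a y = (if P y then - a y + (\<Sum>z\<in>N y. a z) else a y)"
  by (simp add: refl_all_def N_def)

lemma psum_sup: "finite C \<Longrightarrow> {z. a z \<noteq> 0} \<subseteq> C \<Longrightarrow> psum P a = (\<Sum>z\<in>{z\<in>C. P z}. a z)"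
  unfolding psum_def by (rule sum.mono_neutral_left) auto

lemma step_sum:
  assumes fin: "finite {z. a z \<noteq> 0}" and bip: "\<And>u v. adj u v \<Longrightarrow> P u \<longleftrightarrow> \<not> P v"
  shows "finite {z. refl_all P a z \<noteq> 0}"
    "psum P (refl_all P a) = 3 * psum (\<lambda>z. \<not> P z) a - psum P a"
    "psum (\<lambda>z. \<not> P z) (refl_all P a) = psum (\<lambda>z. \<not> P z) a"
proof -
  define A where "A = {z. a z \<noteq> 0}"
  define B where "B = A \<union> (\<Union>w\<in>A. N w)"
  define b where "b = refl_all P a"
  have finA: "finite A" using fin A_def by simp
  have finB: "finite B" unfolding B_def using finA N_fin by auto
  have AB: "A \<subseteq> B" by (auto simp: B_def)
  have supp: "{z. b z \<noteq> 0} \<subseteq> B"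
  proof
    fix z assume "z \<in> {z. b z \<noteq> 0}"
    hence bz: "b z \<noteq> 0" by simp
    show "z \<in> B"
    proof (cases "a z \<noteq> 0")
      case True thus ?thesis by (auto simp: A_def B_def)
    next
      case False
      hence "P z" using bz by (auto simp: b_def refl_all_N split: if_splits)
      hence "(\<Sum>w\<in>N z. a w) \<noteq> 0" using bz False by (auto simp: b_def refl_all_N)
      then obtain w where "w \<in> N z" "a w \<noteq> 0" by (meson sum.neutral)
      hence "w \<in> A" "z \<in> N w" by (auto simp: A_def N_def adj_sym)
      thus ?thesis by (auto simp: B_def)
    qed
  qed
  show "finite {z. refl_all P a z \<noteq> 0}" using finite_subset[OF supp finB] b_def by simp
  have eqQ: "\<And>z. \<not> P z \<Longrightarrow> b z = a z" by (simp add: b_def refl_all_N)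
  have "{z. b z \<noteq> 0 \<and> \<not> P z} = {z. a z \<noteq> 0 \<and> \<not> P z}" using eqQ by auto
  thus "psum (\<lambda>z. \<not> P z) (refl_all P a) = psum (\<lambda>z. \<not> P z) a"
    unfolding psum_def b_def[symmetric] using eqQ by (intro sum.cong) auto
  define C where "C = {z\<in>B. P z}"
  have finC: "finite C" using finB by (simp add: C_def)
  have "psum P b = (\<Sum>z\<in>C. b z)" unfolding C_def by (rule psum_sup[OF finB supp])
  also have "\<dots> = (\<Sum>z\<in>C. - a z + (\<Sum>w\<in>N z. a w))"
    by (rule sum.cong) (auto simp: C_def b_def refl_all_N)
  also have "\<dots> = - (\<Sum>z\<in>C. a z) + (\<Sum>z\<in>C. \<Sum>w\<in>N z. a w)"
    by (simp add: sum.distrib sum_negf sum_subtractf)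
  also have "(\<Sum>z\<in>C. a z) = psum P a"
    unfolding C_def by (rule psum_sup[symmetric, OF finB]) (use AB A_def in auto)
  also have "(\<Sum>z\<in>C. \<Sum>w\<in>N z. a w) = (\<Sum>z\<in>C. \<Sum>w\<in>A. if adj w z then a w else 0)"
  proof (rule sum.cong[OF refl])
    fix z
    have "(\<Sum>w\<in>A. if adj w z then a w else 0) = (\<Sum>w\<in>{w\<in>A. adj w z}. a w)"
      by (rule sum.inter_filter[symmetric, OF finA])
    also have "\<dots> = (\<Sum>w\<in>N z. a w)"
      by (rule sum.mono_neutral_left) (auto simp: N_fin N_fin[unfolded N_def] A_def N_def)
    finally show "(\<Sum>w\<in>N z. a w) = (\<Sum>w\<in>A. if adj w z then a w else 0)" by simp
  qed
  also have "\<dots> = (\<Sum>w\<in>A. \<Sum>z\<in>C. if adj w z then a w else 0)"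
    by (rule sum.swap)
  also have "\<dots> = (\<Sum>w\<in>A. if P w then 0 else 3 * a w)"
  proof (rule sum.cong[OF refl])
    fix w assume wA: "w \<in> A"
    have "(\<Sum>z\<in>C. if adj w z then a w else 0) = (\<Sum>z\<in>{z\<in>C. adj w z}. a w)"
      by (rule sum.inter_filter[symmetric, OF finC])
    also have "\<dots> = of_nat (card {z\<in>C. adj w z}) * a w" by simp
    also have "\<dots> = (if P w then 0 else 3 * a w)"
    proof (cases "P w")
      case True
      hence "{z\<in>C. adj w z} = {}" using bip by (auto simp: C_def)
      hence "card {z\<in>C. adj w z} = 0" by (simp only: card.empty)
      thus ?thesis using True by simp
    next
      case False
      have "{z\<in>C. adj w z} = N w"
        using bip False wA by (auto simp: C_def B_def N_def adj_sym)
      hence "card {z\<in>C. adj w z} = 3" using N_card[of w] by (simp only:)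
      thus ?thesis using False by simp
    qed
    finally show "(\<Sum>z\<in>C. if adj w z then a w else 0) = (if P w then 0 else 3 * a w)" .
  qed
  also have "\<dots> = 3 * (\<Sum>w\<in>{w\<in>A. \<not> P w}. a w)"
    by (simp add: sum.inter_filter[OF finA] sum_distrib_left if_distrib cong: if_cong)
       (rule sum.cong, auto)
  also have "(\<Sum>w\<in>{w\<in>A. \<not> P w}. a w) = psum (\<lambda>z. \<not> P z) a"
    by (simp add: psum_def A_def)
  finally show "psum P (refl_all P a) = 3 * psum (\<lambda>z. \<not> P z) a - psum P a"
    by (simp add: b_def)
qed

lemma step_key:
  assumes J: "Jc P a" and "P z" "adj w z"
  shows "a w \<le> refl_all P a z"
proof -
  have wN: "w \<in> N z" using assms by (simp add: N_def)
  have "refl_all P a z = - a z + (a w + (\<Sum>u\<in>N z - {w}. a u))"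
    using assms(2) sum.remove[OF N_fin wN] by (simp add: refl_all_N)
  moreover have "a z \<le> (\<Sum>u\<in>N z - {w}. a u)" using J assms by (auto simp: Jc_def)
  ultimately show ?thesis by simp
qed

lemma step_pos:
  assumes nn: "\<forall>z. 0 \<le> a z" and J: "Jc P a" and bip: "\<And>u v. adj u v \<Longrightarrow> P u \<longleftrightarrow> \<not> P v"
  shows "\<forall>z. 0 \<le> refl_all P a z" "Jc (\<lambda>z. \<not> P z) (refl_all P a)"
proof -
  show nb: "\<forall>z. 0 \<le> refl_all P a z"
  proof
    fix z show "0 \<le> refl_all P a z"
    proof (cases "P z")
      case True
      obtain w where "w \<in> N z" using N3[of z] by auto
      hence "adj w z" by (simp add: N_def)
      hence "a w \<le> refl_all P a z" using step_key[OF J True] by simp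
      thus ?thesis using nn by (meson order_trans)
    next
      case False thus ?thesis using nn by (simp add: refl_all_N)
    qed
  qed
  show "Jc (\<lambda>z. \<not> P z) (refl_all P a)"
    unfolding Jc_def
  proof (intro allI impI)
    fix z w assume nz: "\<not> P z" and "adj w z"
    obtain u where u: "u \<in> N z - {w}" using N3[of z] by auto
    hence "adj u z" by (simp add: N_def)
    hence Pu: "P u" using bip nz by blast
    have "a z \<le> refl_all P a u" using step_key[OF J Pu] \<open>adj u z\<close> adj_sym by blast
    also have "\<dots> \<le> (\<Sum>w'\<in>N z - {w}. refl_all P a w')"
      using nb u N_fin by (intro member_le_sum) auto
    finally show "refl_all P a z \<le> (\<Sum>w'\<in>N z - {w}. refl_all P a w')"
      using nz by (simp add: refl_all_N)
  qed
qed

definition Pt :: "tree3 \<Rightarrow> nat \<Rightarrow> tree3 \<Rightarrow> bool" where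
  "Pt x t = (\<lambda>z. \<not> (tdist x z mod 2 = t mod 2))"

lemma Pt_bip: "adj u v \<Longrightarrow> Pt x t u \<longleftrightarrow> \<not> Pt x t v"
  using adj_par[of u v x] unfolding Pt_def by presburger

lemma Pt_Suc: "Pt x (Suc t) = (\<lambda>z. \<not> Pt x t z)"
  unfolding Pt_def by (rule ext) presburger

lemma Pt_self: "\<not> Pt x t x \<longleftrightarrow> even t"
proof -
  have "even (tdist x x)" using tdist_par[of x x] by simp
  thus ?thesis unfolding Pt_def by presburger
qed

lemma Pt_adj: "adj x y \<Longrightarrow> Pt x t y \<longleftrightarrow> even t"
  using Pt_bip[of x y x t] Pt_self[of x t] by blast

lemma Sigma_Pt: "(if even t then Sigma_odd x else Sigma_even x) = refl_all (Pt x t)"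
proof -
  have "(\<lambda>y. odd (tdist x y)) = Pt x t" if "even t"
    using that unfolding Pt_def by (intro ext) presburger
  moreover have "(\<lambda>y. even (tdist x y)) = Pt x t" if "odd t"
    using that unfolding Pt_def by (intro ext) presburger
  ultimately show ?thesis by (auto simp: Sigma_odd_def Sigma_even_def)
qed

lemma svec_Suc': "svec x (Suc t) = refl_all (Pt x t) (svec x t)"
  using Sigma_Pt[of t x] by (auto split: if_splits)

lemma rvec_Suc': "rvec x y (Suc t) = refl_all (Pt x t) (rvec x y t)"
  using Sigma_Pt[of t x] by (auto split: if_splits)

lemma fib4: "int (fib (n + 4)) = 3 * int (fib (n + 2)) - int (fib n)"
proof -
  have a: "fib (Suc (Suc (Suc (Suc n)))) = fib (Suc (Suc (Suc n))) + fib (Suc (Suc n))" by (rule fib.simps(3))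
  have b: "fib (Suc (Suc (Suc n))) = fib (Suc (Suc n)) + fib (Suc n)" by (rule fib.simps(3))
  have c: "fib (Suc (Suc n)) = fib (Suc n) + fib n" by (rule fib.simps(3))
  have e: "n + 4 = Suc (Suc (Suc (Suc n)))" "n + 2 = Suc (Suc n)" by simp_all
  show ?thesis unfolding e using a b c by linarith
qed

lemma fibz4: "k \<ge> -1 \<Longrightarrow> fibz (k + 4) = 3 * fibz (k + 2) - fibz k"
proof (cases "k = -1")
  case True thus ?thesis by (simp add: fibz_def numeral_eq_Suc)
next
  case False
  assume "k \<ge> -1"
  hence k0: "k \<ge> 0" using False by simp
  then obtain n where n: "k = int n" by (metis nonneg_eq_int)
  have "nat (int n + 4) = n + 4" "nat (int n + 2) = n + 2" by auto
  thus ?thesis using fib4[of n] n by (simp add: fibz_def)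
qed

declare svec.simps(2)[simp del] rvec.simps(2)[simp del]

lemma s_inv: "finite {z. svec x t z \<noteq> 0} \<and> psum (Pt x t) (svec x t) = fibz (2 * int t)
  \<and> psum (\<lambda>z. \<not> Pt x t z) (svec x t) = fibz (2 * int t + 2)"
proof (induction t)
  case 0
  have e: "{z. svec x 0 z \<noteq> 0} = {x}" by (auto simp: sbasis_def)
  have "{z. svec x 0 z \<noteq> 0 \<and> Pt x 0 z} = {}" using Pt_self[of x 0] by (auto simp: sbasis_def)
  moreover have "{z. svec x 0 z \<noteq> 0 \<and> \<not> Pt x 0 z} = {x}" using Pt_self[of x 0] by (auto simp: sbasis_def)
  moreover have "\<not> Pt x 0 x" using Pt_self[of x 0] by simp
  ultimately show ?case using e by (simp add: psum_def fibz_def sbasis_def numeral_eq_Suc)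
next
  case (Suc t)
  note st = step_sum[of "svec x t" "Pt x t", OF conjunct1[OF Suc.IH] Pt_bip]
  have "psum (Pt x (Suc t)) (svec x (Suc t)) = fibz (2 * int t + 2)"
    using st(3) Suc.IH by (simp add: Pt_Suc svec_Suc')
  moreover have "psum (\<lambda>z. \<not> Pt x (Suc t) z) (svec x (Suc t)) = 3 * fibz (2 * int t + 2) - fibz (2 * int t)"
    using st(2) Suc.IH by (simp add: Pt_Suc svec_Suc')
  moreover have "fibz (2 * int t + 4) = 3 * fibz (2 * int t + 2) - fibz (2 * int t)"
    using fibz4[of "2 * int t"] by simp
  ultimately show ?case using st(1) by (simp add: svec_Suc' algebra_simps)
qed

lemma s_pos: "(\<forall>z. 0 \<le> svec x t z) \<and> Jc (Pt x t) (svec x t)"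
proof (induction t)
  case 0
  have "\<forall>z. 0 \<le> svec x 0 z" by (simp add: sbasis_def)
  moreover have "Jc (Pt x 0) (svec x 0)"
    unfolding Jc_def
  proof (intro allI impI)
    fix z w assume "Pt x 0 z" "adj w z"
    hence "z \<noteq> x" using Pt_self[of x 0] by auto
    hence "svec x 0 z = 0" by (simp add: sbasis_def)
    thus "svec x 0 z \<le> (\<Sum>w'\<in>N z - {w}. svec x 0 w')"
      by (simp add: sum_nonneg sbasis_def)
  qed
  ultimately show ?case by blast
next
  case (Suc t)
  note sp = step_pos[of "svec x t" "Pt x t", OF conjunct1[OF Suc.IH] conjunct2[OF Suc.IH] Pt_bip]
  thus ?case by (simp add: svec_Suc' Pt_Suc)
qed

lemma adj_irrefl: "adj u v \<Longrightarrow> u \<noteq> v"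
  using adj_len by fastforce

lemma r_inv: assumes xy: "adj x y"
  shows "finite {z. rvec x y t z \<noteq> 0} \<and> psum (Pt x t) (rvec x y t) = fibz (2 * int t - 1)
  \<and> psum (\<lambda>z. \<not> Pt x t z) (rvec x y t) = fibz (2 * int t + 1)"
proof (induction t)
  case 0
  have ne: "x \<noteq> y" using adj_irrefl[OF xy] .
  have px: "\<not> Pt x 0 x" using Pt_self[of x 0] by simp
  have py: "Pt x 0 y" using Pt_adj[OF xy, of 0] by simp
  have e: "{z. rvec x y 0 z \<noteq> 0} = {x, y}" using ne by (auto simp: sbasis_def)
  have "{z. rvec x y 0 z \<noteq> 0 \<and> Pt x 0 z} = {y}" using ne px py by (auto simp: sbasis_def)
  moreover have "{z. rvec x y 0 z \<noteq> 0 \<and> \<not> Pt x 0 z} = {x}" using ne px py by (auto simp: sbasis_def)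
  ultimately show ?case using e ne by (simp add: psum_def fibz_def sbasis_def)
next
  case (Suc t)
  note st = step_sum[of "rvec x y t" "Pt x t", OF conjunct1[OF Suc.IH] Pt_bip]
  have "psum (Pt x (Suc t)) (rvec x y (Suc t)) = fibz (2 * int t + 1)"
    using st(3) Suc.IH by (simp add: Pt_Suc rvec_Suc')
  moreover have "psum (\<lambda>z. \<not> Pt x (Suc t) z) (rvec x y (Suc t)) = 3 * fibz (2 * int t + 1) - fibz (2 * int t - 1)"
    using st(2) Suc.IH by (simp add: Pt_Suc rvec_Suc')
  moreover have "fibz (2 * int t + 3) = 3 * fibz (2 * int t + 1) - fibz (2 * int t - 1)"
    using fibz4[of "2 * int t - 1"] by (simp add: algebra_simps)
  ultimately show ?case using st(1) by (simp add: rvec_Suc' algebra_simps)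
qed

lemma r1_pos: assumes xy: "adj x y"
  shows "(\<forall>z. 0 \<le> rvec x y 1 z) \<and> Jc (Pt x 1) (rvec x y 1)"
proof -
  define r0 where "r0 = rvec x y 0"
  define P where "P = Pt x 0"
  have ne: "x \<noteq> y" using adj_irrefl[OF xy] .
  have px: "\<not> P x" using Pt_self[of x 0] by (simp add: P_def)
  have py: "P y" using Pt_adj[OF xy, of 0] by (simp add: P_def)
  have bip: "\<And>u v. adj u v \<Longrightarrow> P u \<longleftrightarrow> \<not> P v" by (simp add: P_def Pt_bip)
  have r0nn: "\<forall>z. 0 \<le> r0 z" by (simp add: r0_def sbasis_def)
  have r0x: "r0 x = 1" using ne by (simp add: r0_def sbasis_def)
  have r0z: "r0 z = 0" if "z \<noteq> x" "z \<noteq> y" for z using that by (simp add: r0_def sbasis_def)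
  have r1: "rvec x y 1 = refl_all P r0" by (simp add: rvec_Suc' P_def r0_def)
  have Nx: "x \<in> N z" if "adj z x" for z using that adj_sym by (simp add: N_def)
  have sumx: "1 \<le> (\<Sum>w\<in>N z. r0 w)" if "adj z x" for z
    using member_le_sum[of x "N z" r0] Nx[OF that] r0nn N_fin r0x by simp
  have le: "r0 z \<le> (\<Sum>w\<in>N z. r0 w)" if "P z" for z
  proof (cases "z = y")
    case True thus ?thesis using sumx[of y] adj_sym[OF xy] ne by (simp add: r0_def sbasis_def)
  next
    case False
    hence "z \<noteq> x" using that px by auto
    thus ?thesis using r0z False r0nn by (simp add: sum_nonneg)
  qed
  have nn: "\<forall>z. 0 \<le> refl_all P r0 z"
    using le r0nn by (simp add: refl_all_N)
  have "Jc (Pt x 1) (refl_all P r0)"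
    unfolding Jc_def
  proof (intro allI impI)
    fix z w assume "Pt x 1 z" "adj w z"
    hence nz: "\<not> P z" using Pt_Suc[of x 0] by (simp add: P_def)
    show "refl_all P r0 z \<le> (\<Sum>w'\<in>N z - {w}. refl_all P r0 w')"
    proof (cases "z = x")
      case False
      hence "refl_all P r0 z = 0" using nz r0z[of z] py by (auto simp: refl_all_N)
      thus ?thesis using nn by (simp add: sum_nonneg)
    next
      case True
      obtain a b c where abc: "N x = {a,b,c}" "a \<noteq> b" "b \<noteq> c" "a \<noteq> c" using N3[of x] by blast
      have "\<exists>u\<in>{a,b,c}. u \<noteq> w \<and> u \<noteq> y" using abc by auto
      then obtain u where u: "u \<in> N x" "u \<noteq> w" "u \<noteq> y" using abc(1) by blast
      hence aux: "adj u x" by (simp add: N_def)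
      hence Pu: "P u" using bip px by blast
      hence "u \<noteq> x" using px by auto
      hence "refl_all P r0 u = (\<Sum>w\<in>N u. r0 w)" using Pu r0z[of u] u by (simp add: refl_all_N)
      also have "\<dots> \<ge> 1" by (rule sumx[OF aux])
      finally have "1 \<le> refl_all P r0 u" .
      also have "refl_all P r0 u \<le> (\<Sum>w'\<in>N x - {w}. refl_all P r0 w')"
        using nn u N_fin by (intro member_le_sum) auto
      finally show ?thesis using True nz r0x by (simp add: refl_all_N)
    qed
  qed
  thus ?thesis using nn r1 by simp
qed

lemma r_pos: assumes xy: "adj x y"
  shows "(\<forall>z. 0 \<le> rvec x y (Suc n) z) \<and> Jc (Pt x (Suc n)) (rvec x y (Suc n))"
proof (induction n)
  case 0 thus ?case using r1_pos[OF xy] by simp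
next
  case (Suc n)
  note sp = step_pos[of "rvec x y (Suc n)" "Pt x (Suc n)", OF conjunct1[OF Suc.IH] conjunct2[OF Suc.IH] Pt_bip]
  have e1: "rvec x y (Suc (Suc n)) = refl_all (Pt x (Suc n)) (rvec x y (Suc n))" by (rule rvec_Suc')
  have e2: "Pt x (Suc (Suc n)) = (\<lambda>z. \<not> Pt x (Suc n) z)" by (rule Pt_Suc)
  show ?case unfolding e1 e2 using sp by blast
qed

theorem proposition2p1:
  fixes x y :: tree3 and t :: nat
  assumes "adj x y"
  shows "(\<forall>z. 0 \<le> svec x t z) \<and> (\<forall>z. 0 \<le> rvec x y t z)
    \<and> minus_part x t (svec x t) = fibz (2 * int t)
    \<and> plus_part x t (svec x t) = fibz (2 * int t + 2)
    \<and> minus_part x t (rvec x y t) = fibz (2 * int t - 1)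
    \<and> plus_part x t (rvec x y t) = fibz (2 * int t + 1)"
proof -
  have mp: "minus_part x t a = psum (Pt x t) a" for a by (simp add: minus_part_def psum_def Pt_def)
  have pp: "plus_part x t a = psum (\<lambda>z. \<not> Pt x t z) a" for a by (simp add: plus_part_def psum_def Pt_def)
  have rnn: "\<forall>z. 0 \<le> rvec x y t z"
  proof (cases t)
    case 0 thus ?thesis by (simp add: sbasis_def)
  next
    case (Suc n) thus ?thesis using r_pos[OF assms, of n] by simp
  qed
  show ?thesis unfolding mp pp using s_inv[of x t] s_pos[of x t] r_inv[OF assms, of t] rnn by simp
qed

end
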